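(* Let $\omega=(\omega_0,\dots,\omega_d)\in\mathbb{R}^{d+1}_{>0}$ with $\omega_0\le\omega_1\le\dots\le\omega_d$. Then for every $i\in\{1,\dots,d-1\}$, $$\mu_i(S(\omega))\leqslant\frac{\Big(\frac{1}{\omega_0}+\sum_{k=i+1}^d\frac{1}{\omega_k}\Big)\Big(\sum_{j=1}^i\frac{1}{\omega_j}\Big)+\sum_{1\le s<t\le i}\frac{1}{\omega_s\omega_t}}{\sum_{k=0}^d\frac{1}{\omega_k}}.$$
   Context: $S(\omega)=\operatorname{conv}(-\omega_0\mathbb{1}_d,\omega_1e_1,\dots,\omega_de_d)\subseteq\mathbb{R}^d$. For a convex body $K\subseteq\mathbb{R}^d$ and $i\in\{1,\dots,d\}$, $\mu_i(K)=\min\{\mu\ge0:(\mu K+\mathbb{Z}^d)\cap U\ne\emptyset$ for every $(d-i)$-dimensional affine subspace $U\subseteq\mathbb{R}^d\}$. *)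

theory Defs
  imports "HOL-Analysis.Analysis"
begin

definition int_lattice :: "(real ^ 'n) set" where
  "int_lattice = {x. \<forall>k. x $ k \<in> \<int>}"

text \<open>Coordinates of real^'n are numbered 1..d via a bijection idx :: 'n => nat onto {1..d};
  the axis e_k is the standard basis vector at the coordinate c with idx c = k.\<close>
definition simplexS :: "('n::finite \<Rightarrow> nat) \<Rightarrow> (nat \<Rightarrow> real) \<Rightarrow> (real ^ 'n) set" where
  "simplexS idx \<omega> = convex hull
     (insert (\<chi> c. - \<omega> 0) ((\<lambda>c. \<omega> (idx c) *\<^sub>R axis c 1) ` UNIV))"

definition covering_minimum :: "nat \<Rightarrow> (real ^ 'n::finite) set \<Rightarrow> real" where
  "covering_minimum i K = Inf {\<mu>. \<mu> \<ge> 0 \<and>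
     (\<forall>U. affine U \<and> aff_dim U = int (CARD('n) - i) \<longrightarrow>
        {\<mu> *\<^sub>R x + z | x z. x \<in> K \<and> z \<in> int_lattice} \<inter> U \<noteq> {})}"

end

theory Submission
  imports Defs
begin

lemma offdiag_sum:
  fixes f :: "'a \<Rightarrow> real"
  assumes "finite X"
  shows "(\<Sum>s\<in>X. \<Sum>t\<in>X. if s = t then 0 else f s * f t) = (sum f X)^2 - (\<Sum>s\<in>X. (f s)^2)"
proof -
  have "(\<Sum>t\<in>X. if s = t then 0 else f s * f t) = (\<Sum>t\<in>X. f s * f t) - (if s \<in> X then f s * f s else 0)" for s
  proof -
    have "(\<Sum>t\<in>X. f s * f t) = (\<Sum>t\<in>X. (if s = t then 0 else f s * f t) + (if s = t then f s * f t else 0))"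
      by (rule sum.cong) auto
    also have "\<dots> = (\<Sum>t\<in>X. if s = t then 0 else f s * f t) + (if s \<in> X then f s * f s else 0)"
      using assms by (simp add: sum.distrib)
    finally show ?thesis by simp
  qed
  then have "(\<Sum>s\<in>X. \<Sum>t\<in>X. if s = t then 0 else f s * f t) = (\<Sum>s\<in>X. (\<Sum>t\<in>X. f s * f t) - f s * f s)"
    by (intro sum.cong) auto
  also have "\<dots> = (\<Sum>s\<in>X. \<Sum>t\<in>X. f s * f t) - (\<Sum>s\<in>X. (f s)^2)"
    by (simp add: sum_subtractf power2_eq_square)
  also have "(\<Sum>s\<in>X. \<Sum>t\<in>X. f s * f t) = (sum f X)^2"
    by (simp add: power2_eq_square sum_product)
  finally show ?thesis .
qed

lemma bij_top:
  "C \<subseteq> {1..n} \<Longrightarrow> \<exists>\<sigma>. inj_on \<sigma> C \<and> \<sigma> ` C = {n - card C + 1..n} \<and> (\<forall>k\<in>C. k \<le> \<sigma> k)"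
proof (induction n arbitrary: C)
  case 0
  then show ?case by (intro exI[of _ id]) auto
next
  case (Suc n)
  have fin: "finite C" using Suc.prems finite_subset by blast
  show ?case
  proof (cases "Suc n \<in> C")
    case True
    let ?C = "C - {Suc n}"
    have sub: "?C \<subseteq> {1..n}" using Suc.prems by auto
    obtain \<sigma> where s: "inj_on \<sigma> ?C" "\<sigma> ` ?C = {n - card ?C + 1..n}" "\<forall>k\<in>?C. k \<le> \<sigma> k"
      using Suc.IH[OF sub] by blast
    have cc: "card ?C = card C - 1" using True fin by simp
    have cle: "card ?C \<le> n" using card_mono[OF _ sub] by simp
    have c1: "card C \<ge> 1" using True fin card_0_eq by fastforce
    define \<tau> where "\<tau> = \<sigma>(Suc n := Suc n)"
    have le: "\<forall>k\<in>?C. \<sigma> k \<le> n" using s(2) by auto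
    have "inj_on \<tau> C"
      unfolding inj_on_def
    proof (intro ballI impI)
      fix x y assume xy: "x \<in> C" "y \<in> C" "\<tau> x = \<tau> y"
      show "x = y"
      proof (cases "x = Suc n"; cases "y = Suc n")
        assume "x \<noteq> Suc n" "y \<noteq> Suc n"
        then show ?thesis using xy s(1) by (auto simp: \<tau>_def inj_on_def)
      next
        assume a: "x = Suc n" "y \<noteq> Suc n"
        then have "\<sigma> y \<le> n" using xy le by auto
        moreover have "\<tau> y = \<sigma> y" "\<tau> x = Suc n" using a by (auto simp: \<tau>_def)
        ultimately show ?thesis using xy by simp
      next
        assume a: "x \<noteq> Suc n" "y = Suc n"
        then have "\<sigma> x \<le> n" using xy le by auto
        moreover have "\<tau> x = \<sigma> x" "\<tau> y = Suc n" using a by (auto simp: \<tau>_def)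
        ultimately show ?thesis using xy by simp
      qed simp
    qed
    moreover have "\<tau> ` C = \<sigma> ` ?C \<union> {Suc n}"
      using True by (auto simp: \<tau>_def)
    moreover have "\<sigma> ` ?C \<union> {Suc n} = {Suc n - card C + 1..Suc n}"
      using s(2) cc cle c1 by auto
    moreover have "\<forall>k\<in>C. k \<le> \<tau> k" using s(3) by (auto simp: \<tau>_def)
    ultimately show ?thesis by blast
  next
    case False
    have sub: "C \<subseteq> {1..n}" using Suc.prems False by (auto simp: le_Suc_eq)
    obtain \<sigma> where s: "inj_on \<sigma> C" "\<sigma> ` C = {n - card C + 1..n}" "\<forall>k\<in>C. k \<le> \<sigma> k"
      using Suc.IH[OF sub] by blast
    have cle: "card C \<le> n" using card_mono[OF _ sub] by simp
    have "inj_on (Suc \<circ> \<sigma>) C" using s(1) by (auto simp: inj_on_def)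
    moreover have "(Suc \<circ> \<sigma>) ` C = {Suc n - card C + 1..Suc n}"
    proof -
      have "(Suc \<circ> \<sigma>) ` C = Suc ` (\<sigma> ` C)" by (simp only: image_comp)
      also have "\<dots> = Suc ` {n - card C + 1..n}" using s(2) by simp
      also have "\<dots> = {Suc n - card C + 1..Suc n}" using cle
        by (simp add: image_Suc_atLeastAtMost Suc_diff_le)
      finally show ?thesis .
    qed
    moreover have "\<forall>k\<in>C. k \<le> (Suc \<circ> \<sigma>) k" using s(3) by auto
    ultimately show ?thesis by blast
  qed
qed

lemma H_mono:
  fixes f :: "nat \<Rightarrow> real"
  assumes fin: "finite X" and inj: "inj_on \<sigma> X" and le: "\<forall>k\<in>X. 0 \<le> f (\<sigma> k) \<and> f (\<sigma> k) \<le> f k"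
  shows "(\<Sum>s\<in>\<sigma>`X. \<Sum>t\<in>\<sigma>`X. if s = t then 0 else f s * f t) \<le> (\<Sum>s\<in>X. \<Sum>t\<in>X. if s = t then 0 else f s * f t)"
proof -
  have "(\<Sum>s\<in>\<sigma>`X. \<Sum>t\<in>\<sigma>`X. if s = t then 0 else f s * f t) = (\<Sum>s\<in>X. \<Sum>t\<in>X. if \<sigma> s = \<sigma> t then 0 else f (\<sigma> s) * f (\<sigma> t))"
    using inj by (simp add: sum.reindex)
  also have "\<dots> \<le> (\<Sum>s\<in>X. \<Sum>t\<in>X. if s = t then 0 else f s * f t)"
  proof (intro sum_mono)
    fix s t assume st: "s \<in> X" "t \<in> X"
    have eq: "(\<sigma> s = \<sigma> t) = (s = t)" using inj st by (auto simp: inj_on_def)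
    show "(if \<sigma> s = \<sigma> t then 0 else f (\<sigma> s) * f (\<sigma> t)) \<le> (if s = t then 0 else f s * f t)"
      unfolding eq using le st by (auto intro!: mult_mono)
  qed
  finally show ?thesis .
qed

lemma pairs_sum:
  fixes u :: "nat \<Rightarrow> real"
  shows "2 * (\<Sum>s\<in>{1..i}. \<Sum>t\<in>{s+1..i}. u s * u t) = (\<Sum>s\<in>{1..i}. u s)^2 - (\<Sum>s\<in>{1..i}. (u s)^2)"
proof (induction i)
  case 0
  then show ?case by simp
next
  case (Suc i)
  have "(\<Sum>s\<in>{1..Suc i}. \<Sum>t\<in>{s+1..Suc i}. u s * u t) = (\<Sum>s\<in>{1..i}. \<Sum>t\<in>{s+1..Suc i}. u s * u t)"
    by (simp add: sum.atLeast_Suc_atMost_Suc_shift)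
  also have "\<dots> = (\<Sum>s\<in>{1..i}. (\<Sum>t\<in>{s+1..i}. u s * u t) + u s * u (Suc i))"
    by (intro sum.cong) auto
  also have "\<dots> = (\<Sum>s\<in>{1..i}. \<Sum>t\<in>{s+1..i}. u s * u t) + (\<Sum>s\<in>{1..i}. u s) * u (Suc i)"
    by (simp add: sum.distrib sum_distrib_right)
  finally show ?case using Suc.IH
    by (simp add: power2_eq_square algebra_simps)
qed

lemma compare:
  fixes u :: "nat \<Rightarrow> real"
  assumes anti: "\<forall>j k. j \<le> k \<longrightarrow> k \<le> d \<longrightarrow> u k \<le> u j"
    and pos: "\<forall>k\<le>d. 0 < u k"
    and I: "I \<subseteq> {1..d}" "card I = i" and id: "i \<le> d"
  shows "2 * (\<Sum>k\<in>{0..d}. u k) * sum u I - (sum u I)^2 - (\<Sum>k\<in>I. (u k)^2)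
     \<le> 2 * ((u 0 + (\<Sum>k\<in>{i+1..d}. u k)) * (\<Sum>j\<in>{1..i}. u j) + (\<Sum>s\<in>{1..i}. \<Sum>t\<in>{s+1..i}. u s * u t))"
proof -
  define C' where "C' = {1..d} - I"
  have finI: "finite I" using I finite_subset by blast
  have cC': "card C' = d - i" unfolding C'_def using I finI by (simp add: card_Diff_subset)
  obtain \<sigma> where s: "inj_on \<sigma> C'" "\<sigma> ` C' = {d - card C' + 1..d}" "\<forall>k\<in>C'. k \<le> \<sigma> k"
    using bij_top[of C' d] by (auto simp: C'_def)
  have s2: "\<sigma> ` C' = {i+1..d}" using s(2) cC' id by simp
  define \<tau> where "\<tau> = \<sigma>(0 := 0)"
  define C where "C = insert 0 C'"
  define C0 where "C0 = insert 0 {i+1..d}"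
  have C'0: "0 \<notin> C'" by (auto simp: C'_def)
  have tC': "\<forall>k\<in>C'. \<tau> k = \<sigma> k" using C'0 by (auto simp: \<tau>_def)
  have sd: "\<forall>k\<in>C'. 1 \<le> \<sigma> k \<and> \<sigma> k \<le> d"
  proof
    fix k assume "k \<in> C'"
    then have "\<sigma> k \<in> {i+1..d}" using s2 by blast
    then show "1 \<le> \<sigma> k \<and> \<sigma> k \<le> d" by auto
  qed
  have t0: "\<tau> 0 = 0" by (simp add: \<tau>_def)
  have injt: "inj_on \<tau> C" unfolding C_def
  proof (rule inj_on_insert[THEN iffD2], rule conjI)
    have "inj_on \<tau> C' = inj_on \<sigma> C'" by (rule inj_on_cong) (use tC' in auto)
    then show "inj_on \<tau> C'" using s(1) by simp
    show "\<tau> 0 \<notin> \<tau> ` (C' - {0})"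
    proof
      assume "\<tau> 0 \<in> \<tau> ` (C' - {0})"
      then obtain k where k: "k \<in> C' - {0}" "\<tau> 0 = \<tau> k" by blast
      then have "k \<in> C'" by simp
      then have "\<sigma> k = 0" using tC' k t0 by auto
      then show False using sd \<open>k \<in> C'\<close> by fastforce
    qed
  qed
  have imt: "\<tau> ` C = C0"
  proof -
    have "\<tau> ` C = insert (\<tau> 0) (\<tau> ` C')" by (simp add: C_def)
    also have "\<tau> ` C' = \<sigma> ` C'" using tC' by (intro image_cong) auto
    finally show ?thesis using t0 s2 by (simp add: C0_def)
  qed
  have let_: "\<forall>k\<in>C. 0 \<le> u (\<tau> k) \<and> u (\<tau> k) \<le> u k"
  proof
    fix k assume k: "k \<in> C"
    show "0 \<le> u (\<tau> k) \<and> u (\<tau> k) \<le> u k"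
    proof (cases "k = 0")
      case True then show ?thesis using pos by (simp add: \<tau>_def less_imp_le)
    next
      case False
      then have "k \<in> C'" using k by (simp add: C_def)
      then show ?thesis using tC' sd s(3) anti pos by (simp add: less_imp_le)
    qed
  qed
  have finC: "finite C" by (simp add: C_def C'_def)
  have H: "(\<Sum>s\<in>C0. \<Sum>t\<in>C0. if s = t then 0 else u s * u t) \<le> (\<Sum>s\<in>C. \<Sum>t\<in>C. if s = t then 0 else u s * u t)"
    using H_mono[OF finC injt let_] imt by simp
  have finC0: "finite C0" by (simp add: C0_def)
  define T where "T = (\<Sum>k\<in>{0..d}. u k)"
  define Qt where "Qt = (\<Sum>k\<in>{0..d}. (u k)^2)"
  define B0 where "B0 = (\<Sum>j\<in>{1..i}. u j)"
  define Q0 where "Q0 = (\<Sum>j\<in>{1..i}. (u j)^2)"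
  have un1: "{0..d} = C \<union> I" "C \<inter> I = {}" using I by (auto simp: C_def C'_def)
  have un2: "{0..d} = C0 \<union> {1..i}" "C0 \<inter> {1..i} = {}" using id by (auto simp: C0_def)
  have SC: "sum u C = T - sum u I" "(\<Sum>k\<in>C. (u k)^2) = Qt - (\<Sum>k\<in>I. (u k)^2)"
    unfolding T_def Qt_def un1(1)
    using sum.union_disjoint[OF finC finI un1(2), of u] sum.union_disjoint[OF finC finI un1(2), of "\<lambda>k. (u k)^2"] by simp_all
  have SC0: "sum u C0 = T - B0" "(\<Sum>k\<in>C0. (u k)^2) = Qt - Q0"
    unfolding T_def Qt_def B0_def Q0_def un2(1)
    using sum.union_disjoint[OF finC0 _ un2(2), of u] sum.union_disjoint[OF finC0 _ un2(2), of "\<lambda>k. (u k)^2"] by simp_all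
  have SC0': "sum u C0 = u 0 + (\<Sum>k\<in>{i+1..d}. u k)" by (simp add: C0_def)
  have P: "2 * (\<Sum>s\<in>{1..i}. \<Sum>t\<in>{s+1..i}. u s * u t) = B0^2 - Q0"
    unfolding B0_def Q0_def by (rule pairs_sum)
  have hyp: "(T - B0)^2 - (Qt - Q0) \<le> (T - sum u I)^2 - (Qt - (\<Sum>k\<in>I. (u k)^2))"
    using H offdiag_sum[OF finC, of u] offdiag_sum[OF finC0, of u] SC SC0 by simp
  have h2: "2 * T * sum u I - (sum u I)^2 - (\<Sum>k\<in>I. (u k)^2) \<le> 2 * T * B0 - B0^2 - Q0"
    using hyp by (simp add: power2_eq_square algebra_simps)
  have e: "u 0 + (\<Sum>k\<in>{i+1..d}. u k) = T - B0" using SC0 SC0' by simp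
  have h3: "2 * ((T - B0) * B0 + (\<Sum>s\<in>{1..i}. \<Sum>t\<in>{s+1..i}. u s * u t)) = 2 * T * B0 - B0^2 - Q0"
    using P by (simp add: power2_eq_square algebra_simps)
  show ?thesis
    unfolding T_def[symmetric] B0_def[symmetric] e h3 using h2 by simp
qed

lemma frac_shift:
  fixes x y :: real
  shows "frac (x + (1 - frac y)) = frac x - frac y + (if frac x < frac y then 1 else 0)"
proof -
  have fx: "0 \<le> frac x" "frac x < 1" "0 \<le> frac y" "frac y < 1" by (auto simp: frac_lt_1)
  have xe: "x = of_int \<lfloor>x\<rfloor> + frac x" by (simp add: frac_def)
  show ?thesis
  proof (cases "frac x < frac y")
    case True
    have "\<lfloor>x + (1 - frac y)\<rfloor> = \<lfloor>x\<rfloor>"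
      by (rule floor_unique) (use fx True xe in linarith)+
    then show ?thesis using True by (simp add: frac_def)
  next
    case False
    have "\<lfloor>x + (1 - frac y)\<rfloor> = \<lfloor>x\<rfloor> + 1"
      by (rule floor_unique) (use fx False xe in linarith)+
    then show ?thesis using False by (simp add: frac_def)
  qed
qed

lemma cover:
  fixes p :: "real^'n" and w :: "'n \<Rightarrow> real" and a0 :: real and J :: "'n set"
  assumes a0: "a0 > 0" and w: "\<forall>c. w c > 0" and pJ: "\<forall>k. k \<notin> J \<longrightarrow> p$k = 0"
  shows "\<exists>c z. c \<ge> 0 \<and> z \<in> int_lattice \<and> (\<forall>k. (p - z)$k + c \<ge> 0) \<and>
     a0*c + (\<Sum>k\<in>UNIV. w k * ((p-z)$k + c))
       \<le> ((a0 + sum w (-J)) * sum w J + ((sum w J)^2 - (\<Sum>k\<in>J. (w k)^2))/2) / (a0 + sum w (-J) + sum w J)"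
proof -
  define A where "A = a0 + sum w (-J)"
  define B where "B = sum w J"
  define Q where "Q = (\<Sum>k\<in>J. (w k)^2)"
  define M where "M = (A * B + (B^2 - Q)/2) / (A + B)"
  define y where "y k = frac (p$k)" for k
  define F where "F c = A*c + (\<Sum>j\<in>J. w j * frac (p$j + c))" for c
  have Apos: "A > 0" unfolding A_def using a0 w by (simp add: sum_nonneg less_imp_le add_pos_nonneg)
  have Bnn: "B \<ge> 0" unfolding B_def using w by (simp add: sum_nonneg less_imp_le)
  have claim1: "\<exists>z. z \<in> int_lattice \<and> (\<forall>k. (p - z)$k + c \<ge> 0) \<and>
      a0*c + (\<Sum>k\<in>UNIV. w k * ((p-z)$k + c)) = F c" if c: "c \<ge> 0" for c
  proof -
    define z :: "real^'n" where "z = (\<chi> k. if k \<in> J then of_int \<lfloor>p$k + c\<rfloor> else 0)"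
    have zl: "z \<in> int_lattice" by (auto simp: int_lattice_def z_def)
    have comp: "p$k - z$k + c = (if k \<in> J then frac (p$k + c) else c)" for k
      using pJ by (auto simp: z_def frac_def)
    have "(\<Sum>k\<in>UNIV. w k * ((p-z)$k + c)) = (\<Sum>k\<in>UNIV. if k \<in> J then w k * frac (p$k + c) else w k * c)"
      by (intro sum.cong) (auto simp: comp)
    also have "\<dots> = (\<Sum>k\<in>J. w k * frac (p$k + c)) + (\<Sum>k\<in>-J. w k * c)"
      by (simp add: sum.If_cases Int_commute Compl_eq_Diff_UNIV)
    also have "(\<Sum>k\<in>-J. w k * c) = sum w (-J) * c" by (simp add: sum_distrib_right)
    finally have "a0*c + (\<Sum>k\<in>UNIV. w k * ((p-z)$k + c)) = F c"
      unfolding F_def A_def by (simp add: algebra_simps)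
    moreover have "\<forall>k. (p - z)$k + c \<ge> 0" using c by (simp add: comp)
    ultimately show ?thesis using zl by blast
  qed
  have F0: "F 0 = (\<Sum>j\<in>J. w j * y j)" by (simp add: F_def y_def)
  have Fk: "F (1 - y k) = A * (1 - y k) + (\<Sum>j\<in>J. w j * (y j - y k + (if y j < y k then 1 else 0)))" for k
    unfolding F_def y_def using frac_shift by simp
  define X where "X = (\<Sum>k\<in>J. \<Sum>j\<in>J. w k * w j * (if y j < y k then 1 else 0))"
  have finJ: "finite J" by simp
  have anti: "(\<Sum>k\<in>J. \<Sum>j\<in>J. w k * w j * (y j - y k)) = 0"
  proof -
    have "(\<Sum>k\<in>J. \<Sum>j\<in>J. w k * w j * y j) = (\<Sum>k\<in>J. \<Sum>j\<in>J. w k * w j * y k)"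
      by (subst sum.swap) (simp add: mult.commute)
    then show ?thesis by (simp add: right_diff_distrib sum_subtractf)
  qed
  have X2: "2 * X \<le> B^2 - Q"
  proof -
    have "2 * X = (\<Sum>k\<in>J. \<Sum>j\<in>J. w k * w j * ((if y j < y k then 1 else 0) + (if y k < y j then 1 else 0)))"
    proof -
      have "X = (\<Sum>k\<in>J. \<Sum>j\<in>J. w k * w j * (if y k < y j then 1 else 0))"
        unfolding X_def by (subst sum.swap) (simp add: mult.commute)
      then show ?thesis unfolding X_def by (simp add: distrib_left sum.distrib)
    qed
    also have "\<dots> \<le> (\<Sum>k\<in>J. \<Sum>j\<in>J. if k = j then 0 else w k * w j)"
      using w by (intro sum_mono) (auto simp: less_imp_le)
    also have "\<dots> = B^2 - Q" unfolding B_def Q_def by (rule offdiag_sum[OF finJ])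
    finally show ?thesis .
  qed
  have avg: "A * F 0 + (\<Sum>k\<in>J. w k * F (1 - y k)) \<le> A * B + (B^2 - Q)/2"
  proof -
    have "(\<Sum>k\<in>J. w k * F (1 - y k)) = (\<Sum>k\<in>J. A * w k - A * (w k * y k) + (\<Sum>j\<in>J. w k * w j * (y j - y k)) + (\<Sum>j\<in>J. w k * w j * (if y j < y k then 1 else 0)))"
    proof (intro sum.cong refl)
      fix k assume "k \<in> J"
      have "w k * (\<Sum>j\<in>J. w j * (y j - y k + (if y j < y k then 1 else 0)))
          = (\<Sum>j\<in>J. w k * w j * (y j - y k) + w k * w j * (if y j < y k then 1 else 0))"
        by (simp add: sum_distrib_left algebra_simps)
      also have "\<dots> = (\<Sum>j\<in>J. w k * w j * (y j - y k)) + (\<Sum>j\<in>J. w k * w j * (if y j < y k then 1 else 0))"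
        by (rule sum.distrib)
      finally show "w k * F (1 - y k) = A * w k - A * (w k * y k) + (\<Sum>j\<in>J. w k * w j * (y j - y k)) + (\<Sum>j\<in>J. w k * w j * (if y j < y k then 1 else 0))"
        unfolding Fk by (simp add: algebra_simps)
    qed
    also have "\<dots> = A * B - A * (\<Sum>k\<in>J. w k * y k) + 0 + X"
      unfolding anti[symmetric] X_def B_def by (simp add: sum.distrib sum_subtractf sum_distrib_left)
    finally show ?thesis using X2 F0 by simp
  qed
  have "\<exists>c. c \<ge> 0 \<and> F c \<le> M"
  proof (rule ccontr)
    assume "\<not> ?thesis"
    then have gt: "\<And>c. c \<ge> 0 \<Longrightarrow> F c > M" by force
    have yl: "y k < 1" for k by (simp add: y_def frac_lt_1)
    have "A * M < A * F 0" using gt[of 0] Apos by simp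
    moreover have "(\<Sum>k\<in>J. w k * M) \<le> (\<Sum>k\<in>J. w k * F (1 - y k))"
      using gt yl w by (intro sum_mono mult_left_mono) (auto simp: less_imp_le)
    ultimately have "A * M + B * M < A * B + (B^2 - Q)/2"
      using avg by (simp add: B_def sum_distrib_right)
    moreover have "(A + B) * M = A * B + (B^2 - Q)/2" unfolding M_def using Apos Bnn by simp
    ultimately show False by (simp add: distrib_right)
  qed
  then obtain c where c: "c \<ge> 0" "F c \<le> M" by blast
  then show ?thesis using claim1[OF c(1)] unfolding M_def A_def B_def Q_def by force
qed

lemma sum_option_UNIV:
  fixes g :: "'n::finite option \<Rightarrow> real"
  shows "(\<Sum>ob\<in>UNIV. g ob) = g None + (\<Sum>k\<in>UNIV. g (Some k))"
proof -
  have "(\<Sum>ob\<in>UNIV. g ob) = (\<Sum>ob\<in>insert None (range Some). g ob)" by (simp only: UNIV_option_conv[symmetric])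
  also have "\<dots> = g None + (\<Sum>ob\<in>range Some. g ob)" by (subst sum.insert) auto
  also have "(\<Sum>ob\<in>range Some. g ob) = (\<Sum>k\<in>UNIV. g (Some k))" by (subst sum.reindex) (auto simp: inj_on_def)
  finally show ?thesis .
qed

lemma mem_S:
  fixes q :: "real^'n::finite" and idx :: "'n \<Rightarrow> nat" and \<omega> :: "nat \<Rightarrow> real"
  assumes idx: "bij_betw idx UNIV {1..CARD('n)}"
    and pos: "\<forall>k\<le>CARD('n). \<omega> k > 0"
    and c: "c \<ge> 0" and qc: "\<forall>k. q$k + c \<ge> 0" and mu: "mu > 0"
    and eq: "(1 / \<omega> 0) * c + (\<Sum>k\<in>UNIV. (1 / \<omega> (idx k)) * (q$k + c)) = mu"
  shows "(1/mu) *\<^sub>R q \<in> simplexS idx \<omega>"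
proof -
  have pk: "\<omega> (idx k) > 0" for k
  proof -
    have "idx k \<in> {1..CARD('n)}" using idx by (auto simp: bij_betw_def)
    then show ?thesis using pos by auto
  qed
  have p0: "\<omega> 0 > 0" using pos by auto
  define V where "V = insert (\<chi> c. - \<omega> 0) ((\<lambda>c. \<omega> (idx c) *\<^sub>R axis c 1) ` (UNIV :: 'n set))"
  define lam :: "'n option \<Rightarrow> real" where
    "lam ob = (case ob of None \<Rightarrow> c / (mu * \<omega> 0) | Some k \<Rightarrow> (q$k + c) / (mu * \<omega> (idx k)))" for ob
  define y :: "'n option \<Rightarrow> real^'n" where
    "y ob = (case ob of None \<Rightarrow> (\<chi> c. - \<omega> 0) | Some k \<Rightarrow> \<omega> (idx k) *\<^sub>R axis k 1)" for ob
  have "(\<Sum>ob\<in>UNIV. lam ob *\<^sub>R y ob) \<in> convex hull V"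
  proof (rule convex_sum)
    show "finite (UNIV :: 'n option set)" by simp
    show "convex (convex hull V)" by simp
    have "(\<Sum>ob\<in>UNIV. lam ob) = c / (mu * \<omega> 0) + (\<Sum>k\<in>UNIV. (q$k + c) / (mu * \<omega> (idx k)))"
      by (simp add: sum_option_UNIV lam_def)
    also have "\<dots> = ((1 / \<omega> 0) * c + (\<Sum>k\<in>UNIV. (1 / \<omega> (idx k)) * (q$k + c))) / mu"
      by (simp add: sum_divide_distrib add_divide_distrib mult_ac)
    also have "\<dots> = 1" using eq mu by simp
    finally show "(\<Sum>ob\<in>UNIV. lam ob) = 1" .
    show "0 \<le> lam ob" for ob
    proof (cases ob)
      case None
      then show ?thesis using c mu p0 by (simp add: lam_def divide_nonneg_pos)
    next
      case (Some k)
      then show ?thesis using qc mu pk[of k] by (simp add: lam_def divide_nonneg_pos)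
    qed
    show "y ob \<in> convex hull V" for ob
      by (rule hull_inc) (auto simp: y_def V_def split: option.split)
  qed
  moreover have "(\<Sum>ob\<in>UNIV. lam ob *\<^sub>R y ob) = (1/mu) *\<^sub>R q"
  proof (subst vec_eq_iff, rule allI)
    fix k
    have "(\<Sum>ob\<in>UNIV. lam ob *\<^sub>R y ob) $ k = (\<Sum>ob\<in>UNIV. lam ob * (y ob $ k))" by simp
    also have "\<dots> = lam None * (y None $ k) + (\<Sum>j\<in>UNIV. lam (Some j) * (y (Some j) $ k))"
      by (rule sum_option_UNIV)
    also have "(\<Sum>j\<in>UNIV. lam (Some j) * (y (Some j) $ k)) = (\<Sum>j\<in>UNIV. if j = k then lam (Some k) * \<omega> (idx k) else 0)"
      by (intro sum.cong) (auto simp: y_def axis_def)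
    also have "\<dots> = lam (Some k) * \<omega> (idx k)" by simp
    also have "lam None * (y None $ k) + lam (Some k) * \<omega> (idx k) = q $ k / mu"
      using p0 pk[of k] mu by (simp add: lam_def y_def field_simps)
    finally show "(\<Sum>ob\<in>UNIV. lam ob *\<^sub>R y ob) $ k = ((1/mu) *\<^sub>R q) $ k" by simp
  qed
  ultimately show ?thesis by (simp add: simplexS_def V_def)
qed

lemma geo:
  fixes U :: "(real^'n::finite) set"
  assumes aff: "affine U" and dimU: "aff_dim U = int (CARD('n) - i)" and iC: "i \<le> CARD('n)"
  shows "\<exists>J p. card J = i \<and> p \<in> U \<and> (\<forall>k. k \<notin> J \<longrightarrow> p$k = 0)"
proof -
  have "U \<noteq> {}" using dimU by auto
  then obtain a where a: "a \<in> U" by blast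
  define V where "V = (\<lambda>x. -a + x) ` U"
  have subV: "subspace V" unfolding V_def by (rule affine_diffs_subspace[OF aff a])
  have "aff_dim U = int (dim ((+) (- a) ` U))" by (rule aff_dim_eq_dim) (simp add: a hull_inc)
  then have dimV: "dim V = CARD('n) - i" using dimU by (simp add: V_def)
  obtain Bv where Bv: "Bv \<subseteq> V" "independent Bv" "V \<subseteq> span Bv" "card Bv = dim V"
    by (rule basis_exists)
  define Ax where "Ax = range (\<lambda>c. axis c 1 :: real^'n)"
  obtain B where B: "Bv \<subseteq> B" "B \<subseteq> Bv \<union> Ax" "independent B" "Bv \<union> Ax \<subseteq> span B"
    using maximal_independent_subset_extend[of Bv "Bv \<union> Ax"] Bv(2) by blast
  have spanAx: "x \<in> span Ax" for x :: "real^'n"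
  proof -
    have "x = (\<Sum>c\<in>UNIV. x$c *\<^sub>R axis c 1)"
    proof (subst vec_eq_iff, rule allI)
      fix i
      have "(\<Sum>c\<in>UNIV. x$c *\<^sub>R axis c 1) $ i = (\<Sum>c\<in>UNIV. x$c * (axis c 1 $ i))" by simp
      also have "\<dots> = (\<Sum>c\<in>UNIV. if c = i then x$i else 0)" by (rule sum.cong) (auto simp: axis_def)
      also have "\<dots> = x$i" by simp
      finally show "x $ i = (\<Sum>c\<in>UNIV. x$c *\<^sub>R axis c 1) $ i" by simp
    qed
    also have "\<dots> \<in> span Ax"
      by (intro span_sum span_scale span_base) (auto simp: Ax_def)
    finally show ?thesis .
  qed
  have aB: "a \<in> span B"
  proof -
    have "Ax \<subseteq> span B" using B(4) by auto
    then have "span Ax \<subseteq> span B" by (simp add: span_minimal)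
    then show ?thesis using spanAx by auto
  qed
  have cardB: "card B \<le> CARD('n)" and finB: "finite B" using independent_bound[OF B(3)] by auto
  define E where "E = B - Bv"
  define J0 where "J0 = {c. axis c 1 \<in> E}"
  have EJ0: "E = (\<lambda>c. axis c 1) ` J0" using B(2) by (auto simp: E_def J0_def Ax_def)
  have injax: "inj (\<lambda>c. axis c (1::real))" by (auto simp: inj_on_def axis_eq_axis)
  have "card E = card J0" unfolding EJ0 by (rule card_image) (rule inj_on_subset[OF injax], simp)
  moreover have "card E = card B - card Bv" unfolding E_def using B(1) finB by (simp add: card_Diff_subset finite_subset)
  ultimately have cJ0: "card J0 \<le> i" using cardB Bv(4) dimV by simp
  have BE: "B = Bv \<union> E" using B(1) by (auto simp: E_def)
  obtain v e where ve: "a = v + e" "v \<in> span Bv" "e \<in> span E"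
    using aB unfolding BE span_Un by blast
  have spV: "span Bv = V" by (rule span_subspace[OF Bv(1) Bv(3) subV])
  have "-v \<in> V" using ve(2) spV subV by (simp add: subspace_neg)
  then obtain x where x: "x \<in> U" "-v = -a + x" by (auto simp: V_def)
  have ex: "e = x" using ve(1) x(2) by (metis add.commute add_diff_cancel diff_add_cancel add_uminus_conv_diff minus_add_distrib minus_minus)
  have subZ: "subspace {z :: real^'n. \<forall>k. k \<notin> J0 \<longrightarrow> z$k = 0}"
    by (auto simp: subspace_def)
  have "E \<subseteq> {z :: real^'n. \<forall>k. k \<notin> J0 \<longrightarrow> z$k = 0}"
    unfolding EJ0 by (auto simp: axis_def)
  then have "span E \<subseteq> {z :: real^'n. \<forall>k. k \<notin> J0 \<longrightarrow> z$k = 0}" using span_minimal[OF _ subZ] by blast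
  then have xz: "\<forall>k. k \<notin> J0 \<longrightarrow> x$k = 0" using ve(3) ex by auto
  have "card (- J0) = CARD('n) - card J0" using card_Diff_subset[of J0 UNIV] by (simp add: Compl_eq_Diff_UNIV)
  then have "i - card J0 \<le> card (- J0)" using iC by simp
  then obtain T where T: "T \<subseteq> - J0" "card T = i - card J0" "finite T"
    by (rule obtain_subset_with_card_n)
  have "card (J0 \<union> T) = i" using T cJ0 by (subst card_Un_disjoint) auto
  moreover have "\<forall>k. k \<notin> J0 \<union> T \<longrightarrow> x$k = 0" using xz by auto
  ultimately show ?thesis using x(1) by blast
qed

lemma mono_omega:
  fixes \<omega> :: "nat \<Rightarrow> real"
  assumes mono: "\<forall>k<d. \<omega> k \<le> \<omega> (Suc k)"
  shows "j \<le> k \<Longrightarrow> k \<le> d \<Longrightarrow> \<omega> j \<le> \<omega> k"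
proof (induction k)
  case 0 then show ?case by simp
next
  case (Suc k)
  show ?case
  proof (cases "j = Suc k")
    case False
    then have "\<omega> j \<le> \<omega> k" using Suc by simp
    also have "\<omega> k \<le> \<omega> (Suc k)" using mono Suc.prems by simp
    finally show ?thesis .
  qed simp
qed

theorem proposition5p8:
  fixes \<omega> :: "nat \<Rightarrow> real" and idx :: "'n::finite \<Rightarrow> nat" and i :: nat
  assumes idx: "bij_betw idx UNIV {1..CARD('n)}"
    and pos: "\<forall>k\<le>CARD('n). \<omega> k > 0"
    and mono: "\<forall>k<CARD('n). \<omega> k \<le> \<omega> (Suc k)"
    and i: "1 \<le> i" "i \<le> CARD('n) - 1"
  shows "covering_minimum i (simplexS idx \<omega>) \<le>
    ((1 / \<omega> 0 + (\<Sum>k\<in>{i+1..CARD('n)}. 1 / \<omega> k)) * (\<Sum>j\<in>{1..i}. 1 / \<omega> j)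
      + (\<Sum>s\<in>{1..i}. \<Sum>t\<in>{s+1..i}. 1 / (\<omega> s * \<omega> t)))
    / (\<Sum>k\<in>{0..CARD('n)}. 1 / \<omega> k)"
proof -
  define d where "d = CARD('n)"
  define u where "u k = 1 / \<omega> k" for k
  define T where "T = (\<Sum>k\<in>{0..CARD('n)}. 1 / \<omega> k)"
  define N0 where "N0 = ((1 / \<omega> 0 + (\<Sum>k\<in>{i+1..CARD('n)}. 1 / \<omega> k)) * (\<Sum>j\<in>{1..i}. 1 / \<omega> j)
      + (\<Sum>s\<in>{1..i}. \<Sum>t\<in>{s+1..i}. 1 / (\<omega> s * \<omega> t)))"
  define \<mu> where "\<mu> = N0 / T"
  have iC: "i \<le> CARD('n)" using i by simp
  have upos: "\<forall>k\<le>d. 0 < u k" using pos by (simp add: u_def d_def)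
  have anti: "\<forall>j k. j \<le> k \<longrightarrow> k \<le> d \<longrightarrow> u k \<le> u j"
  proof (intro allI impI)
    fix j k assume jk: "j \<le> k" "k \<le> d"
    have "\<omega> j \<le> \<omega> k" using mono_omega[of "CARD('n)" \<omega> j k] mono jk by (simp add: d_def)
    moreover have "0 < \<omega> j" "0 < \<omega> k" using pos jk by (auto simp: d_def)
    ultimately show "u k \<le> u j" by (simp add: u_def frac_le)
  qed
  have Tu: "T = u 0 + (\<Sum>k\<in>{1..d}. u k)"
    unfolding T_def u_def d_def by (simp add: sum.atLeast_Suc_atMost)
  have Tpos: "T > 0"
  proof -
    have "(\<Sum>k\<in>{1..d}. u k) \<ge> 0" using upos by (intro sum_nonneg) (auto simp: less_imp_le)
    then show ?thesis using Tu upos by (simp add: add_pos_nonneg)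
  qed
  have N0pos: "N0 > 0"
  proof -
    have a: "1 / \<omega> 0 + (\<Sum>k\<in>{i+1..CARD('n)}. 1 / \<omega> k) > 0"
      using pos by (intro add_pos_nonneg sum_nonneg) (auto simp: less_imp_le)
    have b: "(\<Sum>j\<in>{1..i}. 1 / \<omega> j) > 0"
      using pos i by (intro sum_pos) auto
    have c: "(\<Sum>s\<in>{1..i}. \<Sum>t\<in>{s+1..i}. 1 / (\<omega> s * \<omega> t)) \<ge> 0"
      using pos i by (intro sum_nonneg) (auto simp: less_imp_le)
    show ?thesis unfolding N0_def using a b c by (simp add: add_pos_nonneg)
  qed
  have mupos: "\<mu> > 0" unfolding \<mu>_def using N0pos Tpos by simp
  define w where "w c = 1 / \<omega> (idx c)" for c
  have idxJ: "inj_on idx J" for J using idx by (auto simp: bij_betw_def inj_on_def)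
  have wpos: "\<forall>c. w c > 0"
  proof
    fix c
    have "idx c \<in> {1..CARD('n)}" using idx by (auto simp: bij_betw_def)
    then show "w c > 0" using pos by (simp add: w_def)
  qed
  have a0pos: "1 / \<omega> 0 > 0" using pos by simp
  have sumw: "sum w UNIV = (\<Sum>k\<in>{1..d}. u k)"
    unfolding w_def u_def d_def using sum.reindex_bij_betw[OF idx, of "\<lambda>k. 1 / \<omega> k"] by simp
  have Tw: "1 / \<omega> 0 + sum w UNIV = T" using Tu sumw by (simp add: u_def)
  have key: "\<exists>x z. x \<in> simplexS idx \<omega> \<and> z \<in> int_lattice \<and> \<mu> *\<^sub>R x + z \<in> U"
    if U: "affine U" "aff_dim U = int (CARD('n) - i)" for U
  proof -
    obtain J p where Jp: "card J = i" "p \<in> U" "\<forall>k. k \<notin> J \<longrightarrow> p$k = 0"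
      using geo[OF U iC] by blast
    obtain c z where cz: "c \<ge> 0" "z \<in> int_lattice" "\<forall>k. (p - z)$k + c \<ge> 0"
      "1 / \<omega> 0 * c + (\<Sum>k\<in>UNIV. w k * ((p-z)$k + c))
       \<le> ((1 / \<omega> 0 + sum w (-J)) * sum w J + ((sum w J)^2 - (\<Sum>k\<in>J. (w k)^2))/2) / (1 / \<omega> 0 + sum w (-J) + sum w J)"
      using cover[OF a0pos wpos Jp(3)] by blast
    define I where "I = idx ` J"
    have I: "I \<subseteq> {1..d}" "card I = i" using idx Jp(1) card_image[OF idxJ[of J]]
      by (auto simp: I_def d_def bij_betw_def)
    have B: "sum w J = sum u I" unfolding I_def using sum.reindex[OF idxJ[of J], of u] by (simp add: w_def u_def)
    have Q: "(\<Sum>k\<in>J. (w k)^2) = (\<Sum>k\<in>I. (u k)^2)" unfolding I_def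
      using sum.reindex[OF idxJ[of J], of "\<lambda>k. (u k)^2"] by (simp add: w_def u_def)
    have split: "sum w UNIV = sum w (-J) + sum w J"
      using sum.subset_diff[of J UNIV w] by (simp add: Compl_eq_Diff_UNIV)
    have tot: "1 / \<omega> 0 + sum w (-J) + sum w J = T" using Tw split by simp
    have A: "1 / \<omega> 0 + sum w (-J) = T - sum u I" using tot B by simp
    have cmp: "2 * (\<Sum>k\<in>{0..d}. u k) * sum u I - (sum u I)^2 - (\<Sum>k\<in>I. (u k)^2)
     \<le> 2 * ((u 0 + (\<Sum>k\<in>{i+1..d}. u k)) * (\<Sum>j\<in>{1..i}. u j) + (\<Sum>s\<in>{1..i}. \<Sum>t\<in>{s+1..i}. u s * u t))"
      using compare[OF anti upos I iC[folded d_def]] .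
    have N0u: "(u 0 + (\<Sum>k\<in>{i+1..d}. u k)) * (\<Sum>j\<in>{1..i}. u j) + (\<Sum>s\<in>{1..i}. \<Sum>t\<in>{s+1..i}. u s * u t) = N0"
      by (simp add: N0_def u_def d_def)
    have Tu2: "(\<Sum>k\<in>{0..d}. u k) = T" by (simp add: T_def u_def d_def)
    have num: "(T - sum u I) * sum u I + ((sum u I)^2 - (\<Sum>k\<in>I. (u k)^2))/2 \<le> N0"
    proof -
      have e: "(T - sum u I) * sum u I + ((sum u I)^2 - (\<Sum>k\<in>I. (u k)^2))/2
          = (2 * T * sum u I - (sum u I)^2 - (\<Sum>k\<in>I. (u k)^2))/2"
        by (simp add: field_simps power2_eq_square)
      have h: "\<And>X. X \<le> 2 * N0 \<Longrightarrow> X / 2 \<le> N0" by simp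
      show ?thesis using h[OF cmp[unfolded N0u Tu2]] unfolding e .
    qed
    define G where "G = 1 / \<omega> 0 * c + (\<Sum>k\<in>UNIV. w k * ((p-z)$k + c))"
    have "G \<le> ((T - sum u I) * sum u I + ((sum u I)^2 - (\<Sum>k\<in>I. (u k)^2))/2) / T"
    proof -
      have tot': "T - sum u I + sum u I = T" by simp
      show ?thesis using cz(4) unfolding G_def A B Q tot' .
    qed
    also have "\<dots> \<le> N0 / T" using num Tpos by (simp add: divide_right_mono)
    finally have G: "G \<le> \<mu>" by (simp add: \<mu>_def)
    define c' where "c' = c + (\<mu> - G) / T"
    have c': "c' \<ge> c" using G Tpos by (simp add: c'_def)
    have eq: "1 / \<omega> 0 * c' + (\<Sum>k\<in>UNIV. w k * ((p-z)$k + c')) = \<mu>"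
    proof -
      have "(\<Sum>k\<in>UNIV. w k * ((p-z)$k + c')) = (\<Sum>k\<in>UNIV. w k * ((p-z)$k + c) + w k * (c' - c))"
        by (simp add: algebra_simps)
      also have "\<dots> = (\<Sum>k\<in>UNIV. w k * ((p-z)$k + c)) + sum w UNIV * (c' - c)"
        by (simp add: sum.distrib sum_distrib_right)
      finally have h: "(\<Sum>k\<in>UNIV. w k * ((p-z)$k + c')) = (\<Sum>k\<in>UNIV. w k * ((p-z)$k + c)) + sum w UNIV * (c' - c)" .
      have "1 / \<omega> 0 * c' + (\<Sum>k\<in>UNIV. w k * ((p-z)$k + c')) = G + (1 / \<omega> 0 + sum w UNIV) * (c' - c)"
        unfolding G_def h by (simp add: algebra_simps diff_divide_distrib)
      also have "G + (1 / \<omega> 0 + sum w UNIV) * (c' - c) = G + T * ((\<mu> - G) / T)" unfolding Tw by (simp add: c'_def)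
      also have "\<dots> = \<mu>" using Tpos by simp
      finally show ?thesis .
    qed
    have mem: "(1/\<mu>) *\<^sub>R (p - z) \<in> simplexS idx \<omega>"
    proof (rule mem_S[OF idx pos _ _ mupos])
      show "c' \<ge> 0" using cz(1) c' by linarith
      show "\<forall>k. (p - z)$k + c' \<ge> 0"
      proof
        fix k have "(p - z)$k + c \<ge> 0" using cz(3) by blast
        then show "(p - z)$k + c' \<ge> 0" using c' by linarith
      qed
      show "1 / \<omega> 0 * c' + (\<Sum>k\<in>UNIV. 1 / \<omega> (idx k) * ((p - z) $ k + c')) = \<mu>"
        using eq by (simp add: w_def)
    qed
    have "\<mu> *\<^sub>R ((1/\<mu>) *\<^sub>R (p - z)) + z = p" using mupos by simp
    then have pin: "\<mu> *\<^sub>R ((1/\<mu>) *\<^sub>R (p - z)) + z \<in> U" using Jp(2) by simp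
    show ?thesis by (rule exI[of _ "(1/\<mu>) *\<^sub>R (p - z)"], rule exI[of _ z]) (use mem cz(2) pin in simp)
  qed
  have inset: "\<mu> \<in> {\<mu>. \<mu> \<ge> 0 \<and>
     (\<forall>U. affine U \<and> aff_dim U = int (CARD('n) - i) \<longrightarrow>
        {\<mu> *\<^sub>R x + z | x z. x \<in> simplexS idx \<omega> \<and> z \<in> int_lattice} \<inter> U \<noteq> {})}"
  proof (simp only: mem_Collect_eq, intro conjI allI impI)
    show "\<mu> \<ge> 0" using mupos by simp
    fix U :: "(real^'n) set" assume "affine U \<and> aff_dim U = int (CARD('n) - i)"
    then obtain x z where xz: "x \<in> simplexS idx \<omega>" "z \<in> int_lattice" "\<mu> *\<^sub>R x + z \<in> U"
      using key by blast
    have "\<mu> *\<^sub>R x + z \<in> {\<mu> *\<^sub>R x + z | x z. x \<in> simplexS idx \<omega> \<and> z \<in> int_lattice}"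
      using xz by blast
    then show "{\<mu> *\<^sub>R x + z | x z. x \<in> simplexS idx \<omega> \<and> z \<in> int_lattice} \<inter> U \<noteq> {}"
      using xz(3) by blast
  qed
  have bdd: "bdd_below {\<mu>. \<mu> \<ge> 0 \<and>
     (\<forall>U. affine U \<and> aff_dim U = int (CARD('n) - i) \<longrightarrow>
        {\<mu> *\<^sub>R x + z | x z. x \<in> simplexS idx \<omega> \<and> z \<in> int_lattice} \<inter> U \<noteq> {})}"
    by (rule bdd_belowI[of _ 0]) auto
  have "covering_minimum i (simplexS idx \<omega>) \<le> \<mu>"
    unfolding covering_minimum_def by (rule cInf_lower[OF inset bdd])
  then show ?thesis by (simp add: \<mu>_def N0_def T_def)
qed

end
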